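(* Let $n=2m-1$ be odd, fix $\boldsymbol{\rho}^0\in\mathcal{P}_n$ and $\alpha\in(0,\infty)$, and let $\mathbf{R}\sim\mathrm{Mallows}(\boldsymbol{\rho}^0,\alpha)$ with the footrule distance. For $i=1,\dots,n$ let $o^0_i$ be the item with $\rho^0_{o^0_i}=i$. Then $$\mathbb{E}[R_{o^0_m}\mid\boldsymbol{\rho}^0,\alpha]=\rho^0_{o^0_m}=m.$$
   Context: $\mathcal{P}_n$ denotes the set of permutations of $\{1,\dots,n\}$; a ranking $\mathbf{r}\in\mathcal{P}_n$ assigns rank $r_i$ to item $i$. The footrule distance is $d(\mathbf{r},\boldsymbol{\rho})=\sum_{i=1}^n|r_i-\rho_i|$. The Mallows distribution $\mathrm{Mallows}(\boldsymbol{\rho}^0,\alpha)$ on $\mathcal{P}_n$ has probability mass function $P(\mathbf{R}=\mathbf{r}\mid\boldsymbol{\rho}^0,\alpha)=\frac{1}{Z_n(\alpha)}\exp\{-\frac{\alpha}{n}d(\mathbf{r},\boldsymbol{\rho}^0)\}$ with normalizing constant $Z_n(\alpha)$. *)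

theory Defs
  imports "HOL-Analysis.Analysis" "HOL-Combinatorics.Permutations"
begin

definition rankings :: "nat \<Rightarrow> (nat \<Rightarrow> nat) set" where
  "rankings n = {r. r permutes {1..n}}"

definition footrule :: "nat \<Rightarrow> (nat \<Rightarrow> nat) \<Rightarrow> (nat \<Rightarrow> nat) \<Rightarrow> real" where
  "footrule n r rho = (\<Sum>i\<in>{1..n}. \<bar>real (r i) - real (rho i)\<bar>)"

definition mallows_Z :: "nat \<Rightarrow> (nat \<Rightarrow> nat) \<Rightarrow> real \<Rightarrow> real" where
  "mallows_Z n rho0 \<alpha> = (\<Sum>r\<in>rankings n. exp (- (\<alpha> / real n) * footrule n r rho0))"

definition mallows_pmf :: "nat \<Rightarrow> (nat \<Rightarrow> nat) \<Rightarrow> real \<Rightarrow> (nat \<Rightarrow> nat) \<Rightarrow> real" where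
  "mallows_pmf n rho0 \<alpha> r =
     exp (- (\<alpha> / real n) * footrule n r rho0) / mallows_Z n rho0 \<alpha>"

definition mallows_expected_rank :: "nat \<Rightarrow> (nat \<Rightarrow> nat) \<Rightarrow> real \<Rightarrow> nat \<Rightarrow> real" where
  "mallows_expected_rank n rho0 \<alpha> i =
     (\<Sum>r\<in>rankings n. real (r i) * mallows_pmf n rho0 \<alpha> r)"

end

theory Submission
  imports Defs
begin

definition refl_n :: "nat \<Rightarrow> nat \<Rightarrow> nat" where
  "refl_n n k = (if k \<in> {1..n} then n + 1 - k else k)"

lemma refl_n_inv[simp]: "refl_n n (refl_n n k) = k"
  by (auto simp: refl_n_def)

lemma refl_n_permutes: "refl_n n permutes {1..n}"
proof (rule bij_imp_permutes)
  show "bij_betw (refl_n n) {1..n} {1..n}"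
    by (rule bij_betwI[where g="refl_n n"]) (auto simp: refl_n_def)
  show "\<And>x. x \<notin> {1..n} \<Longrightarrow> refl_n n x = x" unfolding refl_n_def by presburger
qed

theorem mainTheorem4:
  fixes m n :: nat and rho0 :: "nat \<Rightarrow> nat" and \<alpha> :: real
  assumes "m \<ge> 1" and "n = 2 * m - 1"
    and "rho0 \<in> rankings n"
    and "\<alpha> > 0"
  shows "mallows_expected_rank n rho0 \<alpha> (inv rho0 m) = real (rho0 (inv rho0 m))
         \<and> real (rho0 (inv rho0 m)) = real m"
proof -
  let ?S = "{1..n}"
  let ?R = "rankings n"
  let ?s = "refl_n n"
  have p0: "rho0 permutes ?S" using assms(3) by (simp add: rankings_def)
  have mS: "m \<in> ?S" using assms(1,2) by auto
  have sm: "?s m = m" using assms(1,2) by (auto simp: refl_n_def)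
  define o0 where "o0 = inv rho0 m"
  have ro: "rho0 o0 = m" unfolding o0_def using permutes_inverses(1)[OF p0] .
  define pi where "pi = inv rho0 \<circ> ?s \<circ> rho0"
  have pip: "pi permutes ?S" unfolding pi_def
    by (intro permutes_compose permutes_inv p0 refl_n_permutes)
  have pipi: "pi (pi i) = i" for i
    unfolding pi_def using permutes_inverses[OF p0] by simp
  have rpi: "rho0 (pi i) = ?s (rho0 i)" for i
    unfolding pi_def using permutes_inverses[OF p0] by simp
  have pio: "pi o0 = o0" using pipi rpi ro sm
    by (metis permutes_inverses(2)[OF p0] o0_def)
  define Phi where "Phi r = ?s \<circ> r \<circ> pi" for r :: "nat \<Rightarrow> nat"
  have PhiR: "Phi r \<in> ?R" if "r \<in> ?R" for r
    using that unfolding Phi_def rankings_def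
    using pip refl_n_permutes by (auto intro!: permutes_compose)
  have PhiPhi: "Phi (Phi r) = r" for r
    unfolding Phi_def by (auto simp: pipi)
  define w where "w r = exp (- (\<alpha> / real n) * footrule n r rho0)" for r
  have sabs: "\<bar>real (?s a) - real (?s b)\<bar> = \<bar>real a - real b\<bar>" if "a \<in> ?S" "b \<in> ?S" for a b
    using that by (auto simp: refl_n_def)
  have fPhi: "footrule n (Phi r) rho0 = footrule n r rho0" if "r \<in> ?R" for r
  proof -
    have rp: "r permutes ?S" using that by (simp add: rankings_def)
    have "footrule n (Phi r) rho0 = (\<Sum>i\<in>?S. \<bar>real (?s (r (pi i))) - real (?s (rho0 (pi i)))\<bar>)"
      unfolding footrule_def Phi_def by (simp add: rpi)
    also have "\<dots> = (\<Sum>i\<in>?S. \<bar>real (r (pi i)) - real (rho0 (pi i))\<bar>)"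
      apply (rule sum.cong[OF refl])
      apply (rule sabs)
      using permutes_in_image[OF rp] permutes_in_image[OF p0] permutes_in_image[OF pip] by auto
    also have "\<dots> = (\<Sum>i\<in>?S. \<bar>real (r i) - real (rho0 i)\<bar>)"
      using sum.permute[OF pip, of "\<lambda>i. \<bar>real (r i) - real (rho0 i)\<bar>"] by (simp add: comp_def)
    finally show ?thesis unfolding footrule_def .
  qed
  have wPhi: "w (Phi r) = w r" if "r \<in> ?R" for r using fPhi[OF that] by (simp add: w_def)
  have fin: "finite ?R" unfolding rankings_def by (simp add: finite_permutations)
  have idR: "id \<in> ?R" by (simp add: rankings_def)
  have Zpos: "mallows_Z n rho0 \<alpha> > 0"
    unfolding mallows_Z_def using fin idR by (intro sum_pos) auto
  have Zeq: "mallows_Z n rho0 \<alpha> = (\<Sum>r\<in>?R. w r)" by (simp add: mallows_Z_def w_def)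
  have E: "mallows_expected_rank n rho0 \<alpha> o0 = (\<Sum>r\<in>?R. real (r o0) * w r) / mallows_Z n rho0 \<alpha>"
    unfolding mallows_expected_rank_def mallows_pmf_def w_def by (simp add: sum_divide_distrib)
  have sw: "(\<Sum>r\<in>?R. real (r o0) * w r) = (\<Sum>r\<in>?R. real (Phi r o0) * w (Phi r))"
    by (rule sum.reindex_bij_witness[of _ Phi Phi]) (auto simp: PhiPhi PhiR)
  have o0S: "o0 \<in> ?S" using permutes_in_image[OF permutes_inv[OF p0]] mS o0_def by auto
  have Phio: "real (Phi r o0) = real n + 1 - real (r o0)" if "r \<in> ?R" for r
  proof -
    have rp: "r permutes ?S" using that by (simp add: rankings_def)
    have "r o0 \<in> ?S" using permutes_in_image[OF rp] o0S by auto
    then show ?thesis unfolding Phi_def using pio by (auto simp: refl_n_def)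
  qed
  have "2 * (\<Sum>r\<in>?R. real (r o0) * w r) = (\<Sum>r\<in>?R. real (r o0) * w r) + (\<Sum>r\<in>?R. real (Phi r o0) * w (Phi r))"
    using sw by simp
  also have "\<dots> = (\<Sum>r\<in>?R. (real n + 1) * w r)"
    unfolding sum.distrib[symmetric] by (rule sum.cong) (auto simp: Phio wPhi algebra_simps)
  also have "\<dots> = (real n + 1) * mallows_Z n rho0 \<alpha>" by (simp add: Zeq sum_distrib_left)
  finally have "(\<Sum>r\<in>?R. real (r o0) * w r) = real m * mallows_Z n rho0 \<alpha>"
    using assms(1,2) by (simp add: of_nat_diff)
  then have "mallows_expected_rank n rho0 \<alpha> o0 = real m" using E Zpos by simp
  then show ?thesis using ro o0_def by simp
qed

end
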